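(* Let $X$ be a finite simple connected graph with adjacency matrix $A$, and let $u \ne v$ be vertices such that $u$ is spectrally extremal and $u$ and $v$ are strongly cospectral, say $E_r e_v = \sigma_r E_r e_u$ with $\sigma_r \in \{+1,-1\}$ for each $\theta_r \in \Phi_u$. Let $p(x)$ be the polynomial of minimum degree with $p(\theta_r) = \sigma_r$ for all $\theta_r \in \Phi_u$ (so that $p(A)e_u = e_v$). Let $X'$ be the connected component of $X \setminus v$ containing $u$. Then, up to a nonzero constant factor, $p(x)$ is the minimal polynomial of $u$ with respect to $X'$, i.e. the monic polynomial $q$ of least degree such that $q(A(X'))e_u = 0$.
   Context: $A = \sum_r \theta_r E_r$ is the spectral decomposition of $A$ ($\theta_r$ distinct eigenvalues, $E_r$ orthogonal projections onto eigenspaces); $e_w$ is the standard basis vector of $w$. Eigenvalue support: $\Phi_u = \{\theta_r : E_r e_u \ne 0\}$; dual degree $d^*(u) = |\Phi_u|-1$; eccentricity $\varepsilon_u = \max_w d(u,w)$; $u$ is spectrally extremal if $\varepsilon_u = d^*(u)$. Vertices $u,v$ are strongly cospectral if $E_r e_u = \pm E_r e_v$ for every $r$. $A(X')$ denotes the adjacency matrix of $X'$, and $e_u$ is then the standard basis vector of $u$ in $\mathbb{R}^{V(X')}$. *)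

theory Defs
  imports "HOL-Computational_Algebra.Polynomial"
begin

definition simple_graph :: "'a set \<Rightarrow> ('a \<Rightarrow> 'a \<Rightarrow> bool) \<Rightarrow> bool" where
  "simple_graph V E \<longleftrightarrow> finite V \<and> (\<forall>x y. E x y \<longrightarrow> E y x) \<and> (\<forall>x. \<not> E x x)
     \<and> (\<forall>x y. E x y \<longrightarrow> x \<in> V \<and> y \<in> V)"

fun walk :: "'a set \<Rightarrow> ('a \<Rightarrow> 'a \<Rightarrow> bool) \<Rightarrow> nat \<Rightarrow> 'a \<Rightarrow> 'a \<Rightarrow> bool" where
  "walk V E 0 x y \<longleftrightarrow> x \<in> V \<and> x = y"
| "walk V E (Suc k) x y \<longleftrightarrow> x \<in> V \<and> (\<exists>z\<in>V. E x z \<and> walk V E k z y)"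

definition connected_graph :: "'a set \<Rightarrow> ('a \<Rightarrow> 'a \<Rightarrow> bool) \<Rightarrow> bool" where
  "connected_graph V E \<longleftrightarrow> V \<noteq> {} \<and> (\<forall>x\<in>V. \<forall>y\<in>V. \<exists>k. walk V E k x y)"

definition gdist :: "'a set \<Rightarrow> ('a \<Rightarrow> 'a \<Rightarrow> bool) \<Rightarrow> 'a \<Rightarrow> 'a \<Rightarrow> nat" where
  "gdist V E x y = (LEAST k. walk V E k x y)"

definition eccentricity :: "'a set \<Rightarrow> ('a \<Rightarrow> 'a \<Rightarrow> bool) \<Rightarrow> 'a \<Rightarrow> nat" where
  "eccentricity V E u = Max ((\<lambda>w. gdist V E u w) ` V)"

text \<open>Vectors in R^V are functions 'a => real vanishing outside V.\<close>
definition adj :: "('a \<Rightarrow> 'a \<Rightarrow> bool) \<Rightarrow> 'a \<Rightarrow> 'a \<Rightarrow> real" where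
  "adj E i j = (if E i j then 1 else 0)"

definition mvec :: "'a set \<Rightarrow> ('a \<Rightarrow> 'a \<Rightarrow> real) \<Rightarrow> ('a \<Rightarrow> real) \<Rightarrow> ('a \<Rightarrow> real)" where
  "mvec V M x = (\<lambda>i. if i \<in> V then (\<Sum>j\<in>V. M i j * x j) else 0)"

definition poly_mvec :: "'a set \<Rightarrow> ('a \<Rightarrow> 'a \<Rightarrow> real) \<Rightarrow> real poly \<Rightarrow> ('a \<Rightarrow> real) \<Rightarrow> ('a \<Rightarrow> real)" where
  "poly_mvec V M q x = (\<lambda>i. \<Sum>k\<le>degree q. coeff q k * ((mvec V M ^^ k) x) i)"

definition basis_vec :: "'a set \<Rightarrow> 'a \<Rightarrow> ('a \<Rightarrow> real)" where
  "basis_vec V u = (\<lambda>i. if i \<in> V \<and> i = u then 1 else 0)"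

definition eigspace :: "'a set \<Rightarrow> ('a \<Rightarrow> 'a \<Rightarrow> real) \<Rightarrow> real \<Rightarrow> ('a \<Rightarrow> real) set" where
  "eigspace V M \<theta> = {x. (\<forall>i. i \<notin> V \<longrightarrow> x i = 0) \<and> mvec V M x = (\<lambda>i. \<theta> * x i)}"

definition is_eigenvalue :: "'a set \<Rightarrow> ('a \<Rightarrow> 'a \<Rightarrow> real) \<Rightarrow> real \<Rightarrow> bool" where
  "is_eigenvalue V M \<theta> \<longleftrightarrow> (\<exists>x\<in>eigspace V M \<theta>. x \<noteq> (\<lambda>_. 0))"

definition eigproj :: "'a set \<Rightarrow> ('a \<Rightarrow> 'a \<Rightarrow> real) \<Rightarrow> real \<Rightarrow> ('a \<Rightarrow> real) \<Rightarrow> ('a \<Rightarrow> real)" where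
  "eigproj V M \<theta> y = (THE z. z \<in> eigspace V M \<theta> \<and>
      (\<forall>w\<in>eigspace V M \<theta>. (\<Sum>i\<in>V. (y i - z i) * w i) = 0))"

definition eig_support :: "'a set \<Rightarrow> ('a \<Rightarrow> 'a \<Rightarrow> bool) \<Rightarrow> 'a \<Rightarrow> real set" where
  "eig_support V E u = {\<theta>. is_eigenvalue V (adj E) \<theta> \<and>
      eigproj V (adj E) \<theta> (basis_vec V u) \<noteq> (\<lambda>_. 0)}"

definition dual_degree :: "'a set \<Rightarrow> ('a \<Rightarrow> 'a \<Rightarrow> bool) \<Rightarrow> 'a \<Rightarrow> nat" where
  "dual_degree V E u = card (eig_support V E u) - 1"

definition spectrally_extremal :: "'a set \<Rightarrow> ('a \<Rightarrow> 'a \<Rightarrow> bool) \<Rightarrow> 'a \<Rightarrow> bool" where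
  "spectrally_extremal V E u \<longleftrightarrow> eccentricity V E u = dual_degree V E u"

definition strongly_cospectral :: "'a set \<Rightarrow> ('a \<Rightarrow> 'a \<Rightarrow> bool) \<Rightarrow> 'a \<Rightarrow> 'a \<Rightarrow> bool" where
  "strongly_cospectral V E u v \<longleftrightarrow> (\<forall>\<theta>. is_eigenvalue V (adj E) \<theta> \<longrightarrow>
      eigproj V (adj E) \<theta> (basis_vec V u) = eigproj V (adj E) \<theta> (basis_vec V v) \<or>
      eigproj V (adj E) \<theta> (basis_vec V v) = (\<lambda>i. - eigproj V (adj E) \<theta> (basis_vec V u) i))"

text \<open>Vertex set of the connected component of X minus v containing u
 (the graph X' is the subgraph induced on it).\<close>
definition comp_minus :: "'a set \<Rightarrow> ('a \<Rightarrow> 'a \<Rightarrow> bool) \<Rightarrow> 'a \<Rightarrow> 'a \<Rightarrow> 'a set" where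
  "comp_minus V E v u = {w. \<exists>k. walk (V - {v}) E k u w}"

definition annihilates :: "'a set \<Rightarrow> ('a \<Rightarrow> 'a \<Rightarrow> bool) \<Rightarrow> 'a \<Rightarrow> real poly \<Rightarrow> bool" where
  "annihilates V E u q \<longleftrightarrow> poly_mvec V (adj E) q (basis_vec V u) = (\<lambda>_. 0)"

definition vertex_minpoly :: "'a set \<Rightarrow> ('a \<Rightarrow> 'a \<Rightarrow> bool) \<Rightarrow> 'a \<Rightarrow> real poly \<Rightarrow> bool" where
  "vertex_minpoly V E u q \<longleftrightarrow> lead_coeff q = 1 \<and> annihilates V E u q \<and>
     (\<forall>q'. lead_coeff q' = 1 \<and> annihilates V E u q' \<longrightarrow> degree q \<le> degree q')"

end

theory Submission
  imports Defs "HOL-Library.Function_Algebras" "HOL-Computational_Algebra.Fundamental_Theorem_Algebra"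
begin


definition supp_in :: "'a set \<Rightarrow> ('a \<Rightarrow> real) \<Rightarrow> bool" where
  "supp_in V x \<longleftrightarrow> (\<forall>i. i \<notin> V \<longrightarrow> x i = 0)"

lemma mvec_outside: "i \<notin> V \<Longrightarrow> mvec V M x i = 0"
  by (simp add: mvec_def)

lemma funpow_mvec_outside: "supp_in V x \<Longrightarrow> i \<notin> V \<Longrightarrow> (mvec V M ^^ k) x i = 0"
  by (cases k) (auto simp: supp_in_def mvec_def)

lemma mvec_sum: "mvec V M (\<lambda>i. \<Sum>k\<in>K. f k i) = (\<lambda>i. \<Sum>k\<in>K. mvec V M (f k) i)"
proof (cases "finite K")
  case True
  then show ?thesis
    by (auto simp: mvec_def sum_distrib_left intro!: ext sum.swap)
qed (auto simp: mvec_def)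

lemma mvec_lin: "mvec V M (\<lambda>i. a * x i + b * y i) = (\<lambda>i. a * mvec V M x i + b * mvec V M y i)"
  by (auto simp: mvec_def sum.distrib sum_distrib_left algebra_simps intro!: ext)

lemma mvec_scale: "mvec V M (\<lambda>i. a * x i) = (\<lambda>i. a * mvec V M x i)"
  by (auto simp: mvec_def sum_distrib_left algebra_simps intro!: ext)

lemma mvec_zero: "mvec V M (\<lambda>i. 0) = (\<lambda>i. 0)"
  by (auto simp: mvec_def)

lemma funpow_mvec_sum: "(mvec V M ^^ n) (\<lambda>i. \<Sum>k\<in>K. f k i) = (\<lambda>i. \<Sum>k\<in>K. (mvec V M ^^ n) (f k) i)"
  by (induction n) (simp_all add: mvec_sum)

lemma funpow_mvec_lin: "(mvec V M ^^ n) (\<lambda>i. a * x i + b * y i) = (\<lambda>i. a * (mvec V M ^^ n) x i + b * (mvec V M ^^ n) y i)"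
  by (induction n) (simp_all add: mvec_lin)

lemma funpow_mvec_scale: "(mvec V M ^^ n) (\<lambda>i. a * x i) = (\<lambda>i. a * (mvec V M ^^ n) x i)"
  by (induction n) (simp_all add: mvec_scale)

lemma poly_mvec_alt:
  assumes "degree p \<le> n"
  shows "poly_mvec V M p x = (\<lambda>i. \<Sum>k\<le>n. coeff p k * (mvec V M ^^ k) x i)"
proof (rule ext)
  fix i
  show "poly_mvec V M p x i = (\<Sum>k\<le>n. coeff p k * (mvec V M ^^ k) x i)"
    unfolding poly_mvec_def
    by (rule sum.mono_neutral_left) (use assms in \<open>auto simp: coeff_eq_0\<close>)
qed

lemma poly_mvec_add: "poly_mvec V M (p + q) x = (\<lambda>i. poly_mvec V M p x i + poly_mvec V M q x i)"
proof -
  define n where "n = max (degree p) (degree q)"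
  have "degree (p+q) \<le> n" "degree p \<le> n" "degree q \<le> n"
    by (auto simp: n_def degree_add_le)
  then show ?thesis
    by (simp add: poly_mvec_alt[of _ n] sum.distrib distrib_right)
qed

lemma poly_mvec_smult: "poly_mvec V M (smult c p) x = (\<lambda>i. c * poly_mvec V M p x i)"
  by (simp add: poly_mvec_alt[of _ "degree p"] sum_distrib_left mult.assoc)

lemma poly_mvec_0 [simp]: "poly_mvec V M 0 x = (\<lambda>i. 0)"
  by (simp add: poly_mvec_def)

lemma poly_mvec_pCons: "poly_mvec V M (pCons a p) x = (\<lambda>i. a * x i + mvec V M (poly_mvec V M p x) i)"
proof -
  have d: "degree (pCons a p) \<le> Suc (degree p)" by (simp add: degree_pCons_le)
  have "poly_mvec V M (pCons a p) x = (\<lambda>i. \<Sum>k\<le>Suc (degree p). coeff (pCons a p) k * (mvec V M ^^ k) x i)"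
    by (rule poly_mvec_alt[OF d])
  also have "\<dots> = (\<lambda>i. a * x i + (\<Sum>k\<le>degree p. coeff p k * (mvec V M ^^ Suc k) x i))"
    by (simp only: sum.atMost_Suc_shift) simp
  also have "\<dots> = (\<lambda>i. a * x i + mvec V M (poly_mvec V M p x) i)"
    by (simp add: poly_mvec_def mvec_sum mvec_scale)
  finally show ?thesis .
qed

lemma poly_mvec_const: "poly_mvec V M [:c:] x = (\<lambda>i. c * x i)"
  by (simp add: poly_mvec_pCons mvec_zero)

lemma poly_mvec_1: "poly_mvec V M 1 x = x"
  by (simp add: one_pCons poly_mvec_pCons mvec_zero)

lemma poly_mvec_lin: "poly_mvec V M p (\<lambda>i. a * x i + b * y i) = (\<lambda>i. a * poly_mvec V M p x i + b * poly_mvec V M p y i)"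
  by (auto simp: poly_mvec_def funpow_mvec_lin sum.distrib sum_distrib_left algebra_simps intro!: ext)

lemma poly_mvec_vsum: "poly_mvec V M p (\<lambda>i. \<Sum>k\<in>K. f k i) = (\<lambda>i. \<Sum>k\<in>K. poly_mvec V M p (f k) i)"
  by (auto simp: poly_mvec_def funpow_mvec_sum sum_distrib_left intro!: ext sum.swap)

lemma poly_mvec_mult: "poly_mvec V M (p * q) x = poly_mvec V M p (poly_mvec V M q x)"
proof (induction p)
  case 0
  then show ?case by (simp add: poly_mvec_def)
next
  case (pCons a p)
  show ?case
    by (simp add: mult_pCons_left poly_mvec_add poly_mvec_smult poly_mvec_pCons pCons.IH mvec_zero)
qed

lemma poly_mvec_sum: "poly_mvec V M (\<Sum>k\<in>K. f k) x = (\<lambda>i. \<Sum>k\<in>K. poly_mvec V M (f k) x i)"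
proof (induction K rule: infinite_finite_induct)
  case (infinite A) then show ?case by simp
next
  case empty then show ?case by simp
next
  case (insert a F) then show ?case by (simp add: poly_mvec_add)
qed

lemma poly_mvec_eig:
  assumes "mvec V M w = (\<lambda>i. \<theta> * w i)"
  shows "poly_mvec V M f w = (\<lambda>i. poly f \<theta> * w i)"
proof (induction f)
  case 0 then show ?case by simp
next
  case (pCons a p)
  then show ?case
    by (simp only: poly_mvec_pCons pCons.IH mvec_scale assms) (auto simp: algebra_simps)
qed

lemma poly_mvec_supp: "supp_in V x \<Longrightarrow> supp_in V (poly_mvec V M f x)"
  by (auto simp: supp_in_def poly_mvec_def funpow_mvec_outside[unfolded supp_in_def])

lemma mvec_supp: "supp_in V (mvec V M x)"
  by (auto simp: supp_in_def mvec_def)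



definition ip :: "'a set \<Rightarrow> ('a \<Rightarrow> real) \<Rightarrow> ('a \<Rightarrow> real) \<Rightarrow> real" where
  "ip V x y = (\<Sum>i\<in>V. x i * y i)"

definition symm :: "'a set \<Rightarrow> ('a \<Rightarrow> 'a \<Rightarrow> real) \<Rightarrow> bool" where
  "symm V M \<longleftrightarrow> (\<forall>i\<in>V. \<forall>j\<in>V. M i j = M j i)"

lemma ip_lin_left: "ip V (\<lambda>i. a * x i + b * y i) z = a * ip V x z + b * ip V y z"
  by (simp add: ip_def sum.distrib sum_distrib_left algebra_simps)

lemma ip_lin_right: "ip V z (\<lambda>i. a * x i + b * y i) = a * ip V z x + b * ip V z y"
  by (simp add: ip_def sum.distrib sum_distrib_left algebra_simps)

lemma ip_comm: "ip V x y = ip V y x"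
  by (simp add: ip_def mult.commute)

lemma ip_mvec:
  assumes "symm V M"
  shows "ip V (mvec V M x) y = ip V x (mvec V M y)"
proof -
  have "ip V (mvec V M x) y = (\<Sum>i\<in>V. \<Sum>j\<in>V. M i j * x j * y i)"
    by (simp add: ip_def mvec_def sum_distrib_right)
  also have "\<dots> = (\<Sum>j\<in>V. \<Sum>i\<in>V. M i j * x j * y i)"
    by (rule sum.swap)
  also have "\<dots> = (\<Sum>j\<in>V. \<Sum>i\<in>V. x j * (M j i * y i))"
    using assms unfolding symm_def by (intro sum.cong refl) (auto simp: algebra_simps)
  also have "\<dots> = ip V x (mvec V M y)"
    by (simp add: ip_def mvec_def sum_distrib_left)
  finally show ?thesis .
qed

lemma poly_mvec_X: "poly_mvec V M [:0,1:] y = mvec V M y"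
proof -
  have "poly_mvec V M [:1:] y = y" using poly_mvec_const[of V M 1 y] by simp
  then show ?thesis by (simp add: poly_mvec_pCons)
qed

lemma poly_mvec_comm_mvec: "poly_mvec V M p (mvec V M y) = mvec V M (poly_mvec V M p y)"
  by (metis mult.commute poly_mvec_mult poly_mvec_X)

lemma ip_poly:
  assumes "symm V M"
  shows "ip V (poly_mvec V M f x) y = ip V x (poly_mvec V M f y)"
proof (induction f arbitrary: y)
  case 0 then show ?case by (simp add: ip_def)
next
  case (pCons a p)
  have "ip V (poly_mvec V M (pCons a p) x) y = a * ip V x y + ip V (mvec V M (poly_mvec V M p x)) y"
    using ip_lin_left[of V a x 1 "mvec V M (poly_mvec V M p x)" y]
    by (simp add: poly_mvec_pCons)
  also have "\<dots> = a * ip V x y + ip V x (poly_mvec V M p (mvec V M y))"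
    by (simp add: ip_mvec[OF assms] pCons.IH)
  also have "poly_mvec V M p (mvec V M y) = mvec V M (poly_mvec V M p y)"
    by (rule poly_mvec_comm_mvec)
  also have "a * ip V x y + ip V x (mvec V M (poly_mvec V M p y)) = ip V x (poly_mvec V M (pCons a p) y)"
    using ip_lin_right[of V x a y 1 "mvec V M (poly_mvec V M p y)"]
    by (simp add: poly_mvec_pCons)
  finally show ?case .
qed

lemma ip_self_nonneg: "ip V x x \<ge> 0"
  by (simp add: ip_def sum_nonneg)

lemma ip_self_zero:
  assumes "finite V" "supp_in V x" "ip V x x = 0"
  shows "x = (\<lambda>_. 0)"
proof (rule ext)
  fix i
  show "x i = 0"
  proof (cases "i \<in> V")
    case True
    have "\<forall>j\<in>V. x j * x j = 0"
      using assms(3) unfolding ip_def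
      by (subst sum_nonneg_eq_0_iff[symmetric]) (auto simp: assms(1))
    with True show ?thesis by simp
  qed (use assms(2) in \<open>auto simp: supp_in_def\<close>)
qed

lemma ip_self_pos:
  assumes "finite V" "supp_in V x" "x \<noteq> (\<lambda>_. 0)"
  shows "ip V x x > 0"
  using ip_self_zero[OF assms(1,2)] ip_self_nonneg[of V x] assms(3) by force

lemma eigproj_eq:
  assumes "finite V" "z \<in> eigspace V M \<theta>"
    and "\<forall>w\<in>eigspace V M \<theta>. (\<Sum>i\<in>V. (y i - z i) * w i) = 0"
  shows "eigproj V M \<theta> y = z"
  unfolding eigproj_def
proof (rule the_equality)
  show "z \<in> eigspace V M \<theta> \<and> (\<forall>w\<in>eigspace V M \<theta>. (\<Sum>i\<in>V. (y i - z i) * w i) = 0)"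
    using assms by blast
next
  fix z' assume z': "z' \<in> eigspace V M \<theta> \<and> (\<forall>w\<in>eigspace V M \<theta>. (\<Sum>i\<in>V. (y i - z' i) * w i) = 0)"
  define d where "d = (\<lambda>i. 1 * z' i + (-1) * z i)"
  have "mvec V M d = (\<lambda>i. 1 * mvec V M z' i + (-1) * mvec V M z i)"
    unfolding d_def by (rule mvec_lin)
  then have "mvec V M d = (\<lambda>i. \<theta> * d i)"
    using z' assms(2) unfolding eigspace_def by (simp add: d_def algebra_simps)
  moreover have sd: "supp_in V d" using z' assms(2) by (auto simp: d_def eigspace_def supp_in_def)
  ultimately have dE: "d \<in> eigspace V M \<theta>" by (auto simp: eigspace_def supp_in_def)
  have "ip V d d = (\<Sum>i\<in>V. (y i - z i) * d i) - (\<Sum>i\<in>V. (y i - z' i) * d i)"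
    by (simp add: ip_def d_def sum_subtractf[symmetric] algebra_simps)
  also have "\<dots> = 0" using dE z' assms(3) by simp
  finally have "d = (\<lambda>_. 0)" using ip_self_zero[OF assms(1) sd] by simp
  then show "z' = z" unfolding d_def by (auto simp: fun_eq_iff dest: fun_cong)
qed

lemma eig_orth:
  assumes "symm V M" "mvec V M y = (\<lambda>i. \<theta>' * y i)" "mvec V M w = (\<lambda>i. \<theta> * w i)" "\<theta> \<noteq> \<theta>'"
  shows "ip V y w = 0"
proof -
  have "\<theta>' * ip V y w = ip V (mvec V M y) w"
    by (simp add: assms(2) ip_def sum_distrib_left algebra_simps)
  also have "\<dots> = ip V y (mvec V M w)" by (rule ip_mvec[OF assms(1)])
  also have "\<dots> = \<theta> * ip V y w"
    by (simp add: assms(3) ip_def sum_distrib_left algebra_simps)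
  finally show ?thesis using assms(4) by simp
qed

definition lagr :: "real set \<Rightarrow> real \<Rightarrow> real poly" where
  "lagr R \<theta> = smult (inverse (\<Prod>j\<in>R-{\<theta>}. \<theta> - j)) (\<Prod>j\<in>R-{\<theta>}. [:-j,1:])"

lemma poly_lagr:
  assumes "finite R" "\<theta> \<in> R" "\<theta>' \<in> R"
  shows "poly (lagr R \<theta>) \<theta>' = (if \<theta>' = \<theta> then 1 else 0)"
proof (cases "\<theta>' = \<theta>")
  case True
  have "(\<Prod>j\<in>R-{\<theta>}. \<theta> - j) \<noteq> 0" using assms by (simp add: prod_zero_iff)
  then show ?thesis using True by (simp add: lagr_def poly_prod)
next
  case False
  then have "(\<Prod>j\<in>R-{\<theta>}. \<theta>' - j) = 0" using assms by (auto simp: prod_zero_iff)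
  then show ?thesis using False by (simp add: lagr_def poly_prod)
qed

lemma degree_lagr:
  assumes "finite R" "\<theta> \<in> R"
  shows "degree (lagr R \<theta>) \<le> card R - 1"
proof -
  have "degree (\<Prod>j\<in>R-{\<theta>}. [:-j,1:]) = (\<Sum>j\<in>R-{\<theta>}. degree [:-j,(1::real):])"
    by (rule degree_prod_eq_sum_degree) auto
  also have "\<dots> = card (R - {\<theta>})" by simp
  also have "\<dots> = card R - 1" using assms by simp
  finally show ?thesis unfolding lagr_def using degree_smult_le order_trans by metis
qed

lemma lagr_nz:
  assumes "finite R" "\<theta> \<in> R"
  shows "lagr R \<theta> \<noteq> 0"
proof -
  have "(\<Prod>j\<in>R-{\<theta>}. \<theta> - j) \<noteq> 0" using assms by (simp add: prod_zero_iff)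
  moreover have "(\<Prod>j\<in>R-{\<theta>}. [:-j,1::real:]) \<noteq> 0" using assms by (simp add: prod_zero_iff)
  ultimately show ?thesis by (simp add: lagr_def)
qed

lemma poly_zero_on_card:
  fixes f :: "real poly"
  assumes "finite R" "degree f < card R" "\<forall>x\<in>R. poly f x = 0"
  shows "f = 0"
proof (rule ccontr)
  assume "f \<noteq> 0"
  then have "card {x. poly f x = 0} \<le> degree f" by (rule card_poly_roots_bound)
  moreover have "card R \<le> card {x. poly f x = 0}"
    using assms(3) \<open>f \<noteq> 0\<close> by (intro card_mono poly_roots_finite) auto
  ultimately show False using assms(2) by simp
qed

lemma interp:
  assumes "finite R" "R \<noteq> {}"
  shows "degree (\<Sum>\<theta>\<in>R. smult (s \<theta>) (lagr R \<theta>)) \<le> card R - 1"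
    and "\<forall>x\<in>R. poly (\<Sum>\<theta>\<in>R. smult (s \<theta>) (lagr R \<theta>)) x = s x"
proof -
  show "degree (\<Sum>\<theta>\<in>R. smult (s \<theta>) (lagr R \<theta>)) \<le> card R - 1"
  proof (intro degree_sum_le[OF assms(1)])
    fix \<theta> assume "\<theta> \<in> R" then show "degree (smult (s \<theta>) (lagr R \<theta>)) \<le> card R - 1"
      by (rule order_trans[OF degree_smult_le degree_lagr[OF assms(1)]])
  qed
  show "\<forall>x\<in>R. poly (\<Sum>\<theta>\<in>R. smult (s \<theta>) (lagr R \<theta>)) x = s x"
  proof
    fix x assume x: "x \<in> R"
    have "poly (\<Sum>\<theta>\<in>R. smult (s \<theta>) (lagr R \<theta>)) x = (\<Sum>\<theta>\<in>R. s \<theta> * (if x = \<theta> then 1 else 0))"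
      using assms x by (simp add: poly_sum poly_lagr)
    also have "\<dots> = (\<Sum>\<theta>\<in>R. if x = \<theta> then s \<theta> else 0)" by (rule sum.cong) auto
    also have "\<dots> = s x" using assms(1) x by (simp add: sum.delta)
    finally show "poly (\<Sum>\<theta>\<in>R. smult (s \<theta>) (lagr R \<theta>)) x = s x" .
  qed
qed

lemma sum_lagr:
  assumes "finite R" "R \<noteq> {}"
  shows "(\<Sum>\<theta>\<in>R. lagr R \<theta>) = 1"
proof -
  have "(\<Sum>\<theta>\<in>R. smult 1 (lagr R \<theta>)) - 1 = 0"
  proof (rule poly_zero_on_card[OF assms(1)])
    have "card R > 0" using assms by (simp add: card_gt_0_iff)
    have "degree ((\<Sum>\<theta>\<in>R. smult 1 (lagr R \<theta>)) - 1) \<le> max (degree (\<Sum>\<theta>\<in>R. smult 1 (lagr R \<theta>))) (degree (1::real poly))"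
      by (rule degree_diff_le_max)
    then show "degree ((\<Sum>\<theta>\<in>R. smult 1 (lagr R \<theta>)) - 1) < card R"
      using interp(1)[OF assms, of "\<lambda>_. 1"] \<open>card R > 0\<close> by simp
    show "\<forall>x\<in>R. poly ((\<Sum>\<theta>\<in>R. smult 1 (lagr R \<theta>)) - 1) x = 0"
      using interp(2)[OF assms, of "\<lambda>_. 1"] by simp
  qed
  then show ?thesis by simp
qed

lemma mult_lagr:
  assumes "finite R" "\<theta> \<in> R"
  shows "[:-\<theta>,1:] * lagr R \<theta> = smult (inverse (\<Prod>j\<in>R-{\<theta>}. \<theta> - j)) (\<Prod>j\<in>R. [:-j,1:])"
proof -
  have "(\<Prod>j\<in>R. [:-j,1:]) = [:-\<theta>,1:] * (\<Prod>j\<in>R-{\<theta>}. [:-j,1::real:])"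
    using assms by (simp add: prod.remove)
  then show ?thesis by (simp add: lagr_def)
qed

lemma poly_mvec_lin1: "poly_mvec V M [:-\<theta>,1:] y = (\<lambda>i. mvec V M y i - \<theta> * y i)"
  by (simp add: poly_mvec_pCons mvec_zero)



context
  fixes V :: "'a set" and M x and R :: "real set"
  assumes fin: "finite V" and sym: "symm V M" and sx: "supp_in V x"
    and fR: "finite R" and ne: "R \<noteq> {}"
    and ann: "poly_mvec V M (\<Prod>j\<in>R. [:-j,1:]) x = (\<lambda>_. 0)"
    and nz: "\<forall>\<theta>\<in>R. poly_mvec V M (lagr R \<theta>) x \<noteq> (\<lambda>_. 0)"
begin

lemma spec_eigvec:
  assumes "\<theta> \<in> R"
  shows "mvec V M (poly_mvec V M (lagr R \<theta>) x) = (\<lambda>i. \<theta> * poly_mvec V M (lagr R \<theta>) x i)"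
proof -
  have "poly_mvec V M [:-\<theta>,1:] (poly_mvec V M (lagr R \<theta>) x) = poly_mvec V M ([:-\<theta>,1:] * lagr R \<theta>) x"
    by (simp only: poly_mvec_mult)
  also have "\<dots> = (\<lambda>_. 0)"
    by (simp only: mult_lagr[OF fR assms] poly_mvec_smult ann) simp
  finally show ?thesis unfolding poly_mvec_lin1 by (auto simp: fun_eq_iff dest: fun_cong)
qed

lemma spec_decomp: "x = (\<lambda>i. \<Sum>\<theta>\<in>R. poly_mvec V M (lagr R \<theta>) x i)"
  using poly_mvec_sum[of V M "lagr R" R x] by (simp add: sum_lagr[OF fR ne] poly_mvec_1)

lemma spec_supp: "supp_in V (poly_mvec V M f x)"
  by (rule poly_mvec_supp[OF sx])

lemma spec_in_eigspace: "\<theta> \<in> R \<Longrightarrow> poly_mvec V M (lagr R \<theta>) x \<in> eigspace V M \<theta>"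
  using spec_eigvec spec_supp by (auto simp: eigspace_def supp_in_def)

lemma spec_orth:
  assumes "\<theta> \<in> R" "w \<in> eigspace V M \<theta>'" "\<theta>' \<noteq> \<theta>"
  shows "(\<Sum>i\<in>V. poly_mvec V M (lagr R \<theta>) x i * w i) = 0"
  using eig_orth[OF sym spec_eigvec[OF assms(1)], of w \<theta>'] assms(2,3)
  by (auto simp: eigspace_def ip_def)

lemma spec_eigproj:
  "eigproj V M \<theta> x = (if \<theta> \<in> R then poly_mvec V M (lagr R \<theta>) x else (\<lambda>_. 0))"
proof (cases "\<theta> \<in> R")
  case True
  show ?thesis
  proof (simp add: True, rule eigproj_eq[OF fin spec_in_eigspace[OF True]], intro ballI)
    fix w assume w: "w \<in> eigspace V M \<theta>"
    have "(\<Sum>i\<in>V. (x i - poly_mvec V M (lagr R \<theta>) x i) * w i)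
        = (\<Sum>i\<in>V. \<Sum>j\<in>R-{\<theta>}. poly_mvec V M (lagr R j) x i * w i)"
    proof (rule sum.cong[OF refl])
      fix i
      have "x i = (\<Sum>j\<in>R. poly_mvec V M (lagr R j) x i)" by (subst spec_decomp) simp
      also have "\<dots> = poly_mvec V M (lagr R \<theta>) x i + (\<Sum>j\<in>R-{\<theta>}. poly_mvec V M (lagr R j) x i)"
        using True fR by (simp add: sum.remove)
      finally show "(x i - poly_mvec V M (lagr R \<theta>) x i) * w i = (\<Sum>j\<in>R-{\<theta>}. poly_mvec V M (lagr R j) x i * w i)"
        by (simp add: sum_distrib_right)
    qed
    also have "\<dots> = (\<Sum>j\<in>R-{\<theta>}. \<Sum>i\<in>V. poly_mvec V M (lagr R j) x i * w i)" by (rule sum.swap)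
    also have "\<dots> = 0" using spec_orth w by (intro sum.neutral) auto
    finally show "(\<Sum>i\<in>V. (x i - poly_mvec V M (lagr R \<theta>) x i) * w i) = 0" .
  qed
next
  case False
  have z: "(\<lambda>_. 0) \<in> eigspace V M \<theta>" by (simp add: eigspace_def mvec_zero)
  show ?thesis
  proof (simp add: False, rule eigproj_eq[OF fin z], intro ballI)
    fix w assume w: "w \<in> eigspace V M \<theta>"
    have "(\<Sum>i\<in>V. (x i - 0) * w i) = (\<Sum>i\<in>V. \<Sum>j\<in>R. poly_mvec V M (lagr R j) x i * w i)"
    proof (rule sum.cong[OF refl])
      fix i
      have "x i = (\<Sum>j\<in>R. poly_mvec V M (lagr R j) x i)" by (subst spec_decomp) simp
      then show "(x i - 0) * w i = (\<Sum>j\<in>R. poly_mvec V M (lagr R j) x i * w i)"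
        by (simp add: sum_distrib_right)
    qed
    also have "\<dots> = (\<Sum>j\<in>R. \<Sum>i\<in>V. poly_mvec V M (lagr R j) x i * w i)" by (rule sum.swap)
    also have "\<dots> = 0" using spec_orth w False by (intro sum.neutral) auto
    finally show "(\<Sum>i\<in>V. (x i - 0) * w i) = 0" .
  qed
qed

lemma spec_is_eig: "\<theta> \<in> R \<Longrightarrow> is_eigenvalue V M \<theta>"
  using spec_in_eigspace nz unfolding is_eigenvalue_def by blast

lemma spec_support: "{\<theta>. is_eigenvalue V M \<theta> \<and> eigproj V M \<theta> x \<noteq> (\<lambda>_. 0)} = R"
  using spec_is_eig nz by (auto simp: spec_eigproj split: if_splits)

end



lemma fun_sum_apply: "(\<Sum>a\<in>A. f a) i = (\<Sum>a\<in>A. (f a i :: real))"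
  by (induction A rule: infinite_finite_induct) auto

lemma poly_mvec_monom: "poly_mvec V M (monom c k) x = (\<lambda>i. c * (mvec V M ^^ k) x i)"
proof -
  have "poly_mvec V M (monom c k) x = (\<lambda>i. \<Sum>m\<le>k. coeff (monom c k) m * (mvec V M ^^ m) x i)"
    by (rule poly_mvec_alt) (simp add: degree_monom_le)
  also have "\<dots> = (\<lambda>i. \<Sum>m\<le>k. if m = k then c * (mvec V M ^^ m) x i else 0)"
    by (intro ext sum.cong) auto
  finally show ?thesis by simp
qed

lemma exists_annih:
  assumes fin: "finite V" and sx: "supp_in V x"
  shows "\<exists>f. f \<noteq> 0 \<and> poly_mvec V M f x = (\<lambda>_. 0)"
proof -
  define N where "N = card V"
  define P where "P = (\<lambda>k. (mvec V M ^^ k) x)"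
  show ?thesis
  proof (cases "inj_on P {..N}")
    case False
    then obtain i j where ij: "i \<le> N" "j \<le> N" "i \<noteq> j" "P i = P j"
      unfolding inj_on_def by auto
    define f where "f = monom (1::real) i + monom (-1) j"
    have "coeff f i = 1" using ij(3) by (simp add: f_def)
    then have "f \<noteq> 0" by auto
    moreover have "poly_mvec V M f x = (\<lambda>_. 0)"
      using ij(4) unfolding f_def P_def
      by (simp add: poly_mvec_add poly_mvec_monom)
    ultimately show ?thesis by blast
  next
    case True
    interpret VS: vector_space "\<lambda>(c::real) (f::'a\<Rightarrow>real). (\<lambda>i. c * f i)"
      by unfold_locales (auto simp: fun_eq_iff algebra_simps)
    define S where "S = basis_vec V ` V"
    define T where "T = P ` {..N}"
    have cardT: "card T = Suc N" using True by (simp add: T_def card_image)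
    have cardS: "card S \<le> N" unfolding S_def N_def by (rule card_image_le[OF fin])
    have span: "y \<in> VS.span S" if "supp_in V y" for y
    proof -
      have "y = (\<Sum>j\<in>V. (\<lambda>i. y j * basis_vec V j i))"
      proof (rule ext)
        fix i
        show "y i = (\<Sum>j\<in>V. (\<lambda>i. y j * basis_vec V j i)) i"
        proof (cases "i \<in> V")
          case True
          have "(\<Sum>j\<in>V. y j * basis_vec V j i) = (\<Sum>j\<in>V. if j = i then y j else 0)"
            by (intro sum.cong) (auto simp: basis_vec_def)
          then show ?thesis using True fin by (simp add: fun_sum_apply)
        next
          case False
          then show ?thesis using that by (simp add: fun_sum_apply basis_vec_def supp_in_def)
        qed
      qed
      also have "\<dots> \<in> VS.span S"
        by (intro VS.span_sum VS.span_scale VS.span_base) (auto simp: S_def)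
      finally show ?thesis .
    qed
    have "VS.dependent T"
    proof (rule ccontr)
      assume "VS.independent T"
      moreover have "T \<subseteq> VS.span S"
        using span funpow_mvec_outside[OF sx] by (auto simp: T_def P_def supp_in_def)
      ultimately have "card T \<le> card S"
        using VS.independent_span_bound[of S T] fin by (auto simp: S_def)
      with cardT cardS show False by simp
    qed
    then obtain u where u: "\<exists>v\<in>T. u v \<noteq> 0" "(\<Sum>v\<in>T. (\<lambda>i. u v * v i)) = 0"
      using VS.dependent_finite[of T] by (auto simp: T_def)
    define f where "f = (\<Sum>k\<le>N. monom (u (P k)) k)"
    have cf: "coeff f k = (if k \<le> N then u (P k) else 0)" for k
      by (simp add: f_def coeff_sum)
    have df: "degree f \<le> N"
      unfolding f_def by (intro degree_sum_le) (auto intro: order_trans[OF degree_monom_le])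
    have "f \<noteq> 0"
    proof
      assume "f = 0"
      then have "u (P k) = 0" if "k \<le> N" for k using cf[of k] that by simp
      with u(1) show False by (auto simp: T_def)
    qed
    moreover have "poly_mvec V M f x = (\<lambda>_. 0)"
    proof (rule ext)
      fix i
      have "poly_mvec V M f x i = (\<Sum>k\<le>N. u (P k) * P k i)"
        by (simp add: poly_mvec_alt[OF df] cf P_def)
      also have "\<dots> = (\<Sum>v\<in>T. u v * v i)"
        unfolding T_def by (subst sum.reindex[OF True]) simp
      also have "\<dots> = 0" using fun_cong[OF u(2), of i] by (simp add: fun_sum_apply)
      finally show "poly_mvec V M f x i = 0" .
    qed
    ultimately show ?thesis by blast
  qed
qed



definition ev :: "real poly \<Rightarrow> complex \<Rightarrow> complex" where
  "ev p z = poly (map_poly complex_of_real p) z"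

lemma ev_pCons: "ev (pCons a p) z = of_real a + z * ev p z"
  by (simp add: ev_def map_poly_pCons)

lemma ev_0 [simp]: "ev 0 z = 0" by (simp add: ev_def)

lemma ev_add: "ev (p + q) z = ev p z + ev q z"
proof (induction p arbitrary: q)
  case 0 then show ?case by simp
next
  case (pCons a p)
  show ?case
  proof (cases q)
    case (pCons b q')
    have "pCons a p + q = pCons (a+b) (p+q')" using pCons by simp
    then have "ev (pCons a p + q) z = of_real (a+b) + z * ev (p+q') z" by (simp only: ev_pCons)
    also have "\<dots> = of_real (a+b) + z * (ev p z + ev q' z)" by (simp only: pCons.IH)
    finally show ?thesis using pCons by (simp add: ev_pCons algebra_simps)
  qed
qed

lemma ev_smult: "ev (smult c p) z = of_real c * ev p z"
  by (induction p) (simp_all add: ev_pCons algebra_simps)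

lemma ev_mult: "ev (p * q) z = ev p z * ev q z"
  by (induction p) (simp_all add: ev_pCons ev_add ev_smult algebra_simps)

lemma ev_real: "ev p (of_real t) = of_real (poly p t)"
  by (induction p) (simp_all add: ev_pCons)

lemma degree_ev: "degree (map_poly complex_of_real p) = degree p"
  by (rule degree_map_poly) simp

context
  fixes V :: "'a set" and M x and \<mu> :: "real poly"
  assumes fin: "finite V" and sym: "symm V M" and sx: "supp_in V x"
    and mu0: "\<mu> \<noteq> 0" and ann: "poly_mvec V M \<mu> x = (\<lambda>_. 0)"
    and mini: "\<And>g. g \<noteq> 0 \<Longrightarrow> poly_mvec V M g x = (\<lambda>_. 0) \<Longrightarrow> degree \<mu> \<le> degree g"
begin

lemma nzvec: "g \<noteq> 0 \<Longrightarrow> degree g < degree \<mu> \<Longrightarrow> poly_mvec V M g x \<noteq> (\<lambda>_. 0)"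
  using mini by force

lemma no_complex:
  assumes "ev \<mu> z = 0"
  shows "Im z = 0"
proof (rule ccontr)
  assume b0: "Im z \<noteq> 0"
  define a where "a = Re z"
  define b where "b = Im z"
  define q where "q = [:a^2 + b^2, -2*a, 1:]"
  have q0: "q \<noteq> 0" and dq: "degree q = 2" by (simp_all add: q_def)
  have evq: "ev q z = 0"
    by (simp add: q_def ev_pCons a_def b_def complex_eq_iff power2_eq_square algebra_simps)
  define r where "r = \<mu> mod q"
  define s where "s = \<mu> div q"
  have mu: "\<mu> = s * q + r" by (simp add: r_def s_def)
  have "ev r z = 0" using assms mu evq by (simp add: ev_add ev_mult)
  have dr: "degree r \<le> 1" using degree_mod_less[OF q0, of \<mu>] dq by (auto simp: r_def)
  have rr: "r = [:coeff r 0, coeff r 1:]"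
    using dr by (intro poly_eqI) (auto simp: coeff_pCons coeff_eq_0 split: nat.split)
  have "ev [:coeff r 0, coeff r 1:] z = 0" using \<open>ev r z = 0\<close> rr by metis
  then have e: "of_real (coeff r 0) + z * of_real (coeff r 1) = 0" by (simp add: ev_pCons)
  have "Im z * coeff r 1 = Im (of_real (coeff r 0) + z * of_real (coeff r 1))" by simp
  also have "\<dots> = 0" by (simp only: e zero_complex.sel)
  finally have "Im z * coeff r 1 = 0" .
  then have "coeff r 1 = 0" using b0 by simp
  with e have "coeff r 0 = 0" by simp
  with \<open>coeff r 1 = 0\<close> rr have r0: "r = 0" by simp
  then have mu': "\<mu> = s * q" using mu by simp
  then have s0: "s \<noteq> 0" using mu0 by auto
  have ds: "degree s < degree \<mu>" using mu' s0 q0 dq by (simp add: degree_mult_eq)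
  define y where "y = poly_mvec V M s x"
  have y0: "y \<noteq> (\<lambda>_. 0)" using nzvec[OF s0 ds] by (simp add: y_def)
  have sy: "supp_in V y" unfolding y_def by (rule poly_mvec_supp[OF sx])
  have qy: "poly_mvec V M q y = (\<lambda>_. 0)"
    using ann mu' by (simp add: y_def poly_mvec_mult[symmetric] mult.commute)
  define w where "w = poly_mvec V M [:-a,1:] y"
  have "ip V w w = ip V y (poly_mvec V M ([:-a,1:] * [:-a,1:]) y)"
    by (simp only: w_def ip_poly[OF sym] poly_mvec_mult)
  also have "[:-a,1:] * [:-a,1:] = q + [:-(b^2):]"
    by (simp add: q_def power2_eq_square algebra_simps)
  also have "poly_mvec V M (q + [:-(b^2):]) y = (\<lambda>i. -(b^2) * y i)"
    by (simp add: poly_mvec_add qy poly_mvec_const)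
  also have "ip V y (\<lambda>i. -(b^2) * y i) = -(b^2) * ip V y y"
    by (simp add: ip_def sum_distrib_left algebra_simps)
  finally have "ip V w w = -(b^2) * ip V y y" .
  moreover have "ip V y y > 0" by (rule ip_self_pos[OF fin sy y0])
  moreover have "b^2 > 0" using b0 by (simp add: b_def)
  ultimately have "ip V w w < 0" by (simp add: mult_pos_pos)
  with ip_self_nonneg[of V w] show False by simp
qed

lemma no_double: "\<not> ([:-\<theta>,1:] * [:-\<theta>,1:]) dvd \<mu>"
proof
  assume "([:-\<theta>,1:] * [:-\<theta>,1:]) dvd \<mu>"
  then obtain h where h: "\<mu> = [:-\<theta>,1:] * [:-\<theta>,1:] * h" by (auto elim: dvdE)
  define g where "g = [:-\<theta>,1:] * h"
  have h0: "h \<noteq> 0" using h mu0 by (metis mult_zero_right)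
  have g0: "g \<noteq> 0" using h0 by (simp add: g_def del: mult_pCons_left)
  have "degree \<mu> = degree g + 1" using h h0 by (simp add: g_def degree_mult_eq del: mult_pCons_left)
  then have dg: "degree g < degree \<mu>" by simp
  define y where "y = poly_mvec V M g x"
  have y0: "y \<noteq> (\<lambda>_. 0)" using nzvec[OF g0 dg] by (simp add: y_def)
  have sy: "supp_in V y" unfolding y_def by (rule poly_mvec_supp[OF sx])
  have "ip V y y = ip V x (poly_mvec V M (g * g) x)"
    by (simp add: y_def ip_poly[OF sym] poly_mvec_mult)
  also have "g * g = h * \<mu>" unfolding h g_def by (simp only: mult_ac)
  also have "poly_mvec V M (h * \<mu>) x = (\<lambda>_. 0)"
    by (simp add: poly_mvec_mult ann poly_mvec_lin[of V M h 0 x 0 x, simplified])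
  finally have "ip V y y = 0" by (simp add: ip_def)
  with ip_self_pos[OF fin sy y0] show False by simp
qed

lemma divisor_root:
  assumes "g dvd \<mu>" "degree g \<ge> 1"
  shows "\<exists>\<theta>. poly g \<theta> = 0"
proof -
  have "\<not> constant (poly (map_poly complex_of_real g))"
    using assms(2) by (simp add: constant_degree degree_ev)
  then obtain z where z: "poly (map_poly complex_of_real g) z = 0"
    using fundamental_theorem_of_algebra by blast
  obtain k where k: "\<mu> = g * k" using assms(1) by (auto elim: dvdE)
  have "ev g z = 0" using z by (simp add: ev_def)
  have "ev \<mu> z = 0" using k by (simp add: ev_mult \<open>ev g z = 0\<close>)
  then have "Im z = 0" by (rule no_complex)
  then have "z = of_real (Re z)" by (simp add: complex_eq_iff)
  then have "ev g (of_real (Re z)) = 0" using z by (simp add: ev_def)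
  then have "poly g (Re z) = 0" by (simp add: ev_real)
  then show ?thesis by blast
qed

lemma split_divisor:
  "g dvd \<mu> \<Longrightarrow> lead_coeff g = 1 \<Longrightarrow> g = (\<Prod>\<theta>\<in>{\<theta>. poly g \<theta> = 0}. [:-\<theta>,1:])"
proof (induction "degree g" arbitrary: g rule: less_induct)
  case less
  show ?case
  proof (cases "degree g = 0")
    case True
    then obtain c where gc: "g = [:c:]" by (elim degree_eq_zeroE)
    then have g1: "g = 1" using less.prems(2) by (simp add: one_pCons)
    then show ?thesis by simp
  next
    case False
    then obtain \<theta> where t: "poly g \<theta> = 0" using divisor_root[OF less.prems(1)] by auto
    have "[:-\<theta>,1:] dvd g" using t poly_eq_0_iff_dvd by blast
    then obtain g' where g': "g = [:-\<theta>,1:] * g'" by (rule dvdE)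
    have g'0: "g' \<noteq> 0"
    proof
      assume "g' = 0"
      then have "g = 0" using g' by simp
      with less.prems(2) show False by simp
    qed
    have dg': "degree g' < degree g" using g' g'0 by (simp add: degree_mult_eq del: mult_pCons_left)
    have lg': "lead_coeff g' = 1" using g' less.prems(2) by (simp add: lead_coeff_mult del: mult_pCons_left)
    have "g' dvd g" unfolding g' by (rule dvd_triv_right)
    then have g'dvd: "g' dvd \<mu>" using less.prems(1) by (rule dvd_trans)
    have IH: "g' = (\<Prod>\<theta>\<in>{\<theta>. poly g' \<theta> = 0}. [:-\<theta>,1:])" by (rule less.hyps[OF dg' g'dvd lg'])
    have nt: "poly g' \<theta> \<noteq> 0"
    proof
      assume "poly g' \<theta> = 0"
      then have "[:-\<theta>,1:] dvd g'" using poly_eq_0_iff_dvd by blast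
      then obtain g'' where g'': "g' = [:-\<theta>,1:] * g''" by (rule dvdE)
      have "g = ([:-\<theta>,1:] * [:-\<theta>,1:]) * g''" by (simp only: g' g'' mult.assoc)
      then have "([:-\<theta>,1:] * [:-\<theta>,1:]) dvd g" by (rule dvdI)
      then have "([:-\<theta>,1:] * [:-\<theta>,1:]) dvd \<mu>" using less.prems(1) by (rule dvd_trans)
      with no_double show False by blast
    qed
    have roots: "{t. poly g t = 0} = insert \<theta> {t. poly g' t = 0}"
      using g' by (auto simp del: mult_pCons_left)
    have fin': "finite {t. poly g' t = 0}" by (rule poly_roots_finite[OF g'0])
    have "g = [:-\<theta>,1:] * g'" by (rule g')
    also have "\<dots> = [:-\<theta>,1:] * (\<Prod>\<theta>\<in>{\<theta>. poly g' \<theta> = 0}. [:-\<theta>,1:])" using IH by (rule arg_cong)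
    also have "\<dots> = (\<Prod>\<theta>\<in>{\<theta>. poly g \<theta> = 0}. [:-\<theta>,1:])"
      using nt by (simp add: roots prod.insert[OF fin'] del: mult_pCons_left)
    finally show ?thesis .
  qed
qed

end

lemma exists_R:
  assumes fin: "finite V" and sym: "symm V M" and sx: "supp_in V x" and x0: "x \<noteq> (\<lambda>_. 0)"
  shows "\<exists>R. finite R \<and> R \<noteq> {} \<and> poly_mvec V M (\<Prod>j\<in>R. [:-j,1:]) x = (\<lambda>_. 0)
           \<and> (\<forall>\<theta>\<in>R. poly_mvec V M (lagr R \<theta>) x \<noteq> (\<lambda>_. 0))"
proof -
  obtain f where f: "f \<noteq> 0 \<and> poly_mvec V M f x = (\<lambda>_. 0)" using exists_annih[OF fin sx] by blast
  obtain \<mu> where mu: "\<mu> \<noteq> 0 \<and> poly_mvec V M \<mu> x = (\<lambda>_. 0)"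
    and mini: "\<And>g. g \<noteq> 0 \<and> poly_mvec V M g x = (\<lambda>_. 0) \<Longrightarrow> degree \<mu> \<le> degree g"
    using ex_has_least_nat[of "\<lambda>f. f \<noteq> 0 \<and> poly_mvec V M f x = (\<lambda>_. 0)" f degree] f by blast
  define c where "c = lead_coeff \<mu>"
  have c0: "c \<noteq> 0" using mu by (simp add: c_def)
  define \<mu>1 where "\<mu>1 = smult (inverse c) \<mu>"
  have l1: "lead_coeff \<mu>1 = 1" using c0 by (simp add: \<mu>1_def c_def)
  have "\<mu> = \<mu>1 * [:c:]" using c0 by (simp add: \<mu>1_def)
  then have dvd: "\<mu>1 dvd \<mu>" by (metis dvd_triv_left)
  define R where "R = {\<theta>. poly \<mu>1 \<theta> = 0}"
  have sp: "\<mu>1 = (\<Prod>j\<in>R. [:-j,1:])"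
    unfolding R_def
    by (rule split_divisor[OF fin sym sx _ _ _ dvd l1]) (use mu mini in auto)
  have d1: "degree \<mu>1 = degree \<mu>" using c0 by (simp add: \<mu>1_def)
  have m10: "\<mu>1 \<noteq> 0" using l1 by auto
  have fR: "finite R" unfolding R_def by (rule poly_roots_finite[OF m10])
  have cardR: "card R = degree \<mu>"
    using d1 sp by (simp add: degree_prod_eq_sum_degree)
  have ann1: "poly_mvec V M \<mu>1 x = (\<lambda>_. 0)" using mu by (simp add: \<mu>1_def poly_mvec_smult)
  have "degree \<mu> \<noteq> 0"
  proof
    assume "degree \<mu> = 0"
    then obtain a where ma: "\<mu> = [:a:]" by (elim degree_eq_zeroE)
    then have "poly_mvec V M \<mu> x = (\<lambda>i. a * x i)" by (simp only: poly_mvec_const)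
    moreover have "a \<noteq> 0" using mu ma by auto
    ultimately show False using mu x0 by (auto simp: fun_eq_iff dest: fun_cong)
  qed
  then have Rne: "R \<noteq> {}" using cardR by auto
  have "\<forall>\<theta>\<in>R. poly_mvec V M (lagr R \<theta>) x \<noteq> (\<lambda>_. 0)"
  proof
    fix \<theta> assume t: "\<theta> \<in> R"
    have "lagr R \<theta> \<noteq> 0" by (rule lagr_nz[OF fR t])
    moreover have "degree (lagr R \<theta>) < degree \<mu>"
      using degree_lagr[OF fR t] cardR \<open>degree \<mu> \<noteq> 0\<close> by simp
    ultimately show "poly_mvec V M (lagr R \<theta>) x \<noteq> (\<lambda>_. 0)" using mini by force
  qed
  then show ?thesis using fR Rne ann1 sp by auto
qed



lemma walk_in: "walk W E k x y \<Longrightarrow> x \<in> W \<and> y \<in> W"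
  by (induction k arbitrary: x) auto

lemma walk_append: "walk W E a x y \<Longrightarrow> walk W E b y z \<Longrightarrow> walk W E (a+b) x z"
  by (induction a arbitrary: x) auto

lemma walk_one: "x \<in> W \<Longrightarrow> y \<in> W \<Longrightarrow> E x y \<Longrightarrow> walk W E 1 x y"
  by simp

lemma walk_snoc: "walk W E (Suc k) x y \<longleftrightarrow> (\<exists>z. walk W E k x z \<and> E z y \<and> y \<in> W)"
proof
  show "walk W E (Suc k) x y \<Longrightarrow> \<exists>z. walk W E k x z \<and> E z y \<and> y \<in> W"
  proof (induction k arbitrary: x)
    case 0 then show ?case by auto
  next
    case (Suc k)
    then obtain z where z: "x \<in> W" "z \<in> W" "E x z" "walk W E (Suc k) z y" by auto
    from Suc.IH[OF z(4)] obtain z' where "walk W E k z z'" "E z' y" "y \<in> W" by auto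
    with z show ?case by (intro exI[of _ z']) auto
  qed
next
  assume "\<exists>z. walk W E k x z \<and> E z y \<and> y \<in> W"
  then obtain z where z: "walk W E k x z" "E z y" "y \<in> W" by auto
  have "walk W E 1 z y" using z walk_in[OF z(1)] by simp
  from walk_append[OF z(1) this] show "walk W E (Suc k) x y" by simp
qed

lemma walk_split: "walk W E (a+b) x z \<Longrightarrow> \<exists>y. walk W E a x y \<and> walk W E b y z"
proof (induction a arbitrary: x)
  case 0 then show ?case using walk_in[OF 0] by auto
next
  case (Suc a)
  then obtain y where "x \<in> W" "y \<in> W" "E x y" "walk W E (a+b) y z" by auto
  with Suc.IH show ?case by fastforce
qed

lemma walk_sym:
  assumes "\<forall>x y. E x y \<longrightarrow> E y x"
  shows "walk W E k x y \<Longrightarrow> walk W E k y x"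
proof (induction k arbitrary: x)
  case 0 then show ?case by auto
next
  case (Suc k)
  then obtain z where z: "x \<in> W" "z \<in> W" "E x z" "walk W E k z y" by auto
  have "walk W E k y z" by (rule Suc.IH[OF z(4)])
  then show ?case unfolding walk_snoc using z assms by blast
qed

lemma sum_pos_iff:
  fixes f :: "'b \<Rightarrow> real"
  assumes "finite A" "\<forall>a\<in>A. f a \<ge> 0"
  shows "(\<Sum>a\<in>A. f a) > 0 \<longleftrightarrow> (\<exists>a\<in>A. f a > 0)"
proof
  assume "(\<Sum>a\<in>A. f a) > 0"
  then show "\<exists>a\<in>A. f a > 0"
    by (metis (no_types, lifting) linorder_not_less sum_nonpos)
next
  assume "\<exists>a\<in>A. f a > 0"
  then obtain a where "a \<in> A" "f a > 0" by auto
  then show "(\<Sum>a\<in>A. f a) > 0"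
    using member_le_sum[of a A f] assms by fastforce
qed

lemma count_walks:
  assumes fin: "finite W"
  shows "(mvec W (adj E) ^^ k) (basis_vec W u) i \<ge> 0 \<and>
         ((mvec W (adj E) ^^ k) (basis_vec W u) i > 0 \<longleftrightarrow> walk W E k i u)"
proof (induction k arbitrary: i)
  case 0 then show ?case by (auto simp: basis_vec_def)
next
  case (Suc k)
  let ?N = "(mvec W (adj E) ^^ k) (basis_vec W u)"
  have IH1: "\<And>j. ?N j \<ge> 0" and IH2: "\<And>j. ?N j > 0 \<longleftrightarrow> walk W E k j u" using Suc.IH by blast+
  have a0: "\<And>j. adj E i j \<ge> 0" by (simp add: adj_def)
  have nn: "\<forall>j\<in>W. adj E i j * ?N j \<ge> 0" using IH1 a0 by simp
  have eq: "(mvec W (adj E) ^^ Suc k) (basis_vec W u) i = (if i \<in> W then (\<Sum>j\<in>W. adj E i j * ?N j) else 0)"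
    by (simp add: mvec_def)
  have "(\<Sum>j\<in>W. adj E i j * ?N j) > 0 \<longleftrightarrow> (\<exists>j\<in>W. adj E i j * ?N j > 0)"
    by (rule sum_pos_iff[OF fin nn])
  also have "\<dots> \<longleftrightarrow> (\<exists>j\<in>W. E i j \<and> walk W E k j u)"
  proof -
    have "adj E i j * ?N j > 0 \<longleftrightarrow> E i j \<and> walk W E k j u" for j
      using IH2[of j] by (simp add: adj_def)
    then show ?thesis by blast
  qed
  finally show ?case using eq nn by (auto intro: sum_nonneg)
qed



theorem lemma3p4:
  fixes V :: "'a set" and E :: "'a \<Rightarrow> 'a \<Rightarrow> bool" and u v :: 'a
    and \<sigma> :: "real \<Rightarrow> real" and p :: "real poly"
  assumes "simple_graph V E" and "connected_graph V E"
    and "u \<in> V" and "v \<in> V" and "u \<noteq> v"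
    and "spectrally_extremal V E u"
    and "strongly_cospectral V E u v"
    and "\<forall>\<theta>\<in>eig_support V E u. (\<sigma> \<theta> = 1 \<or> \<sigma> \<theta> = -1) \<and>
           eigproj V (adj E) \<theta> (basis_vec V v) = (\<lambda>i. \<sigma> \<theta> * eigproj V (adj E) \<theta> (basis_vec V u) i)"
    and "\<forall>\<theta>\<in>eig_support V E u. poly p \<theta> = \<sigma> \<theta>"
    and "\<forall>q. (\<forall>\<theta>\<in>eig_support V E u. poly q \<theta> = \<sigma> \<theta>) \<longrightarrow> degree p \<le> degree q"
  shows "\<exists>c. c \<noteq> 0 \<and> vertex_minpoly (comp_minus V E v u) E u (smult c p)"
proof -
  note sg = assms(1)[unfolded simple_graph_def]
  have fin: "finite V" using sg by blast
  have Esym: "\<forall>x y. E x y \<longrightarrow> E y x" using sg by blast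
  have sym: "symm V (adj E)" using Esym by (auto simp: symm_def adj_def)
  define A where "A = adj E"
  define eu where "eu = basis_vec V u"
  define ev' where "ev' = basis_vec V v"
  have seu: "supp_in V eu" and sev: "supp_in V ev'"
    by (auto simp: supp_in_def eu_def ev'_def basis_vec_def)
  have eu0: "eu \<noteq> (\<lambda>_. 0)" using assms(3) by (auto simp: eu_def basis_vec_def fun_eq_iff)
  have ev0: "ev' \<noteq> (\<lambda>_. 0)" using assms(4) by (auto simp: ev'_def basis_vec_def fun_eq_iff)
  obtain Ru where Ru: "finite Ru" "Ru \<noteq> {}" "poly_mvec V A (\<Prod>j\<in>Ru. [:-j,1:]) eu = (\<lambda>_. 0)"
      "\<forall>\<theta>\<in>Ru. poly_mvec V A (lagr Ru \<theta>) eu \<noteq> (\<lambda>_. 0)"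
    using exists_R[OF fin sym seu eu0] unfolding A_def by blast
  obtain Rv where Rv: "finite Rv" "Rv \<noteq> {}" "poly_mvec V A (\<Prod>j\<in>Rv. [:-j,1:]) ev' = (\<lambda>_. 0)"
      "\<forall>\<theta>\<in>Rv. poly_mvec V A (lagr Rv \<theta>) ev' \<noteq> (\<lambda>_. 0)"
    using exists_R[OF fin sym sev ev0] unfolding A_def by blast
  note su = spec_eigproj[OF fin sym[folded A_def] seu Ru]
    spec_support[OF fin sym[folded A_def] seu Ru]
    spec_decomp[OF fin sym[folded A_def] seu Ru]
    spec_eigvec[OF fin sym[folded A_def] seu Ru]
    spec_is_eig[OF fin sym[folded A_def] seu Ru]
  note sv = spec_eigproj[OF fin sym[folded A_def] sev Rv]
    spec_decomp[OF fin sym[folded A_def] sev Rv]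
    spec_is_eig[OF fin sym[folded A_def] sev Rv]
  have supp: "eig_support V E u = Ru"
    using su(2) by (simp add: eig_support_def A_def eu_def)
  define xu where "xu = (\<lambda>\<theta>. poly_mvec V A (lagr Ru \<theta>) eu)"
  have RvRu: "Rv \<subseteq> Ru"
  proof
    fix \<theta> assume t: "\<theta> \<in> Rv"
    have "is_eigenvalue V (adj E) \<theta>" using sv(3)[OF t] by (simp add: A_def)
    then have sc: "eigproj V A \<theta> eu = eigproj V A \<theta> ev' \<or> eigproj V A \<theta> ev' = (\<lambda>i. - eigproj V A \<theta> eu i)"
      using assms(7) by (simp add: strongly_cospectral_def A_def eu_def ev'_def)
    have "eigproj V A \<theta> ev' \<noteq> (\<lambda>_. 0)" using sv(1)[of \<theta>] t Rv(4) by simp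
    then have "eigproj V A \<theta> eu \<noteq> (\<lambda>_. 0)" using sc by (auto simp: fun_eq_iff)
    then show "\<theta> \<in> Ru" using su(1)[of \<theta>] by (auto split: if_splits)
  qed
  have PE: "poly_mvec V A p eu = ev'"
  proof -
    have "ev' = (\<lambda>i. \<Sum>\<theta>\<in>Rv. eigproj V A \<theta> ev' i)"
      using sv(2) by (subst sv(1)) simp
    also have "\<dots> = (\<lambda>i. \<Sum>\<theta>\<in>Ru. eigproj V A \<theta> ev' i)"
      by (intro ext sum.mono_neutral_left Ru(1) RvRu) (auto simp: sv(1))
    also have "\<dots> = (\<lambda>i. \<Sum>\<theta>\<in>Ru. \<sigma> \<theta> * xu \<theta> i)"
      using assms(8) by (intro ext sum.cong refl) (simp add: supp A_def eu_def ev'_def xu_def su(1)[unfolded A_def eu_def])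
    also have "\<dots> = poly_mvec V A p eu"
    proof -
      have "poly_mvec V A p eu = poly_mvec V A p (\<lambda>i. \<Sum>\<theta>\<in>Ru. xu \<theta> i)"
        using su(3) by (simp add: xu_def)
      also have "\<dots> = (\<lambda>i. \<Sum>\<theta>\<in>Ru. poly_mvec V A p (xu \<theta>) i)" by (rule poly_mvec_vsum)
      also have "\<dots> = (\<lambda>i. \<Sum>\<theta>\<in>Ru. \<sigma> \<theta> * xu \<theta> i)"
        using assms(9) supp
        by (intro ext sum.cong refl) (simp add: xu_def poly_mvec_eig[OF su(4)])
      finally show ?thesis by simp
    qed
    finally show ?thesis by simp
  qed
  define q0 where "q0 = (\<Sum>\<theta>\<in>Ru. smult (\<sigma> \<theta>) (lagr Ru \<theta>))"
  have "degree p \<le> degree q0"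
    using assms(10) interp(2)[OF Ru(1,2), of \<sigma>] supp by (simp add: q0_def)
  moreover have "degree q0 \<le> card Ru - 1" unfolding q0_def by (rule interp(1)[OF Ru(1,2)])
  moreover have ecc: "eccentricity V E u = card Ru - 1"
    using assms(6) supp by (simp add: spectrally_extremal_def dual_degree_def)
  ultimately have dm: "degree p \<le> eccentricity V E u" by simp
  define d where "d = degree p"
  define m where "m = eccentricity V E u"
  define N where "N = (\<lambda>k i. (mvec V A ^^ k) eu i)"
  have cnt: "N k i \<ge> 0 \<and> (N k i > 0 \<longleftrightarrow> walk V E k i u)" for k i
    using count_walks[OF fin, where E=E and k=k and u=u and i=i] by (simp add: N_def A_def eu_def)
  have conn: "\<forall>x\<in>V. \<forall>y\<in>V. \<exists>k. walk V E k x y" using assms(2) by (simp add: connected_graph_def)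
  have Vne: "V \<noteq> {}" using assms(3) by auto
  have "m \<in> gdist V E u ` V" unfolding m_def eccentricity_def
    by (rule Max_in) (use fin Vne in auto)
  then obtain w0 where w0: "w0 \<in> V" "gdist V E u w0 = m" by auto
  have ex0: "\<exists>k. walk V E k u w0" using conn assms(3) w0(1) by blast
  have wm: "walk V E m u w0" using LeastI_ex[OF ex0] w0(2) by (simp add: gdist_def)
  have nosh0: "\<not> walk V E k u w0" if "k < m" for k
    using not_less_Least[of k "\<lambda>k. walk V E k u w0"] that w0(2) by (simp add: gdist_def)
  have "d \<le> m" using dm by (simp add: d_def m_def)
  then obtain w where w1: "walk V E d u w" and w2: "walk V E (m-d) w w0"
    using walk_split[of V E d "m-d" u w0] wm by auto
  have noshw: "\<not> walk V E k w u" if "k < d" for k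
  proof
    assume "walk V E k w u"
    then have "walk V E k u w" by (rule walk_sym[OF Esym])
    have "k + (m-d) < m" using that \<open>d \<le> m\<close> by linarith
    with walk_append[OF \<open>walk V E k u w\<close> w2] nosh0[of "k + (m-d)"] show False by blast
  qed
  have Nw0: "N k w = 0" if "k < d" for k using cnt[of k w] noshw[OF that] by simp
  have Nwd: "N d w > 0" using cnt[of d w] walk_sym[OF Esym w1] by simp
  have coord: "poly_mvec V A p eu i = (\<Sum>k\<le>d. coeff p k * N k i)" for i
    by (simp add: poly_mvec_def d_def N_def)
  have p0: "p \<noteq> 0"
  proof
    assume "p = 0"
    then have "ev' = (\<lambda>_. 0)" using PE by simp
    with ev0 show False by simp
  qed
  have "poly_mvec V A p eu w = (\<Sum>k<d. coeff p k * N k w) + coeff p d * N d w"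
    by (simp add: coord lessThan_Suc_atMost[symmetric])
  also have "(\<Sum>k<d. coeff p k * N k w) = 0" by (intro sum.neutral) (simp add: Nw0)
  finally have "poly_mvec V A p eu w = coeff p d * N d w" by simp
  moreover have "coeff p d \<noteq> 0" using p0 by (simp add: d_def)
  ultimately have "ev' w \<noteq> 0" using Nwd PE by simp
  then have wv: "w = v" by (auto simp: ev'_def basis_vec_def split: if_splits)
  have walkdv: "walk V E d u v" using w1 wv by simp
  have noshv: "\<not> walk V E k u v" if "k < d" for k
    using noshw[OF that] walk_sym[OF Esym] wv by blast
  have Nv0: "N k v = 0" if "k < d" for k
  proof -
    have "\<not> walk V E k v u" using noshv[OF that] walk_sym[OF Esym] by blast
    then show ?thesis using cnt[of k v] by simp
  qed
  define V' where "V' = comp_minus V E v u"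
  have V'sub: "V' \<subseteq> V - {v}" unfolding V'_def comp_minus_def using walk_in by fastforce
  have uV': "u \<in> V'" unfolding V'_def comp_minus_def
    using assms(3,5) by (intro CollectI exI[of _ 0]) simp
  have clos: "j \<in> V'" if H: "i \<in> V'" "j \<in> V" "j \<noteq> v" "E i j" for i j
  proof -
    obtain k where k: "walk (V - {v}) E k u i" using H(1) unfolding V'_def comp_minus_def by blast
    have "walk (V - {v}) E 1 i j" using H V'sub by auto
    from walk_append[OF k this] show ?thesis unfolding V'_def comp_minus_def by blast
  qed
  have finV': "finite V'" using V'sub fin by (meson finite_Diff finite_subset)
  define N' where "N' = (\<lambda>k i. (mvec V' A ^^ k) (basis_vec V' u) i)"
  have agree: "k \<le> d \<Longrightarrow> i \<in> V' \<Longrightarrow> N' k i = N k i" for k i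
  proof (induction k arbitrary: i)
    case 0
    then show ?case using uV' V'sub by (auto simp: N'_def N_def eu_def basis_vec_def)
  next
    case (Suc k)
    have iV: "i \<in> V" using Suc.prems V'sub by auto
    have "N' (Suc k) i = (\<Sum>j\<in>V'. A i j * N' k j)"
      using Suc.prems by (simp add: N'_def mvec_def)
    also have "\<dots> = (\<Sum>j\<in>V'. A i j * N k j)"
      using Suc.IH Suc.prems by (intro sum.cong refl) simp
    also have "\<dots> = (\<Sum>j\<in>V. A i j * N k j)"
    proof (rule sum.mono_neutral_left[OF fin])
      show "V' \<subseteq> V" using V'sub by auto
      show "\<forall>j\<in>V - V'. A i j * N k j = 0"
      proof
        fix j assume j: "j \<in> V - V'"
        show "A i j * N k j = 0"
        proof (cases "E i j")
          case True
          then have "j = v" using clos[OF Suc.prems(2), of j] j by auto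
          then show ?thesis using Nv0[of k] Suc.prems by simp
        qed (simp add: A_def adj_def)
      qed
    qed
    also have "\<dots> = N (Suc k) i" using iV by (simp add: N_def mvec_def)
    finally show ?case .
  qed
  have sbu: "supp_in V' (basis_vec V' u)" by (auto simp: supp_in_def basis_vec_def)
  have annp: "poly_mvec V' A p (basis_vec V' u) = (\<lambda>_. 0)"
  proof (rule ext)
    fix i
    have c': "poly_mvec V' A p (basis_vec V' u) i = (\<Sum>k\<le>d. coeff p k * N' k i)"
      by (simp add: poly_mvec_def d_def N'_def)
    show "poly_mvec V' A p (basis_vec V' u) i = 0"
    proof (cases "i \<in> V'")
      case True
      have "(\<Sum>k\<le>d. coeff p k * N' k i) = (\<Sum>k\<le>d. coeff p k * N k i)"
        using agree True by (intro sum.cong refl) simp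
      also have "\<dots> = ev' i" using coord[of i] PE by simp
      also have "\<dots> = 0" using True V'sub by (auto simp: ev'_def basis_vec_def)
      finally show ?thesis using c' by simp
    next
      case False
      then show ?thesis using c' funpow_mvec_outside[OF sbu False] by (simp add: N'_def)
    qed
  qed
  have avoid: "walk V E k u x \<Longrightarrow> k < d \<Longrightarrow> walk (V - {v}) E k u x" for k x
  proof (induction k arbitrary: x)
    case 0 then show ?case using assms(5) by auto
  next
    case (Suc k)
    obtain z where z: "walk V E k u z" "E z x" "x \<in> V" using Suc.prems(1) unfolding walk_snoc by blast
    have "x \<noteq> v" using Suc.prems(2) noshv[of "Suc k"] Suc.prems(1) by auto
    have "walk (V - {v}) E k u z" using Suc.IH[OF z(1)] Suc.prems(2) by simp
    then show ?case unfolding walk_snoc using z \<open>x \<noteq> v\<close> by blast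
  qed
  have mind: "d \<le> degree q" if q: "lead_coeff q = 1" "annihilates V' E u q" for q
  proof (rule ccontr)
    assume "\<not> d \<le> degree q"
    then have tl: "degree q < d" by simp
    define t where "t = degree q"
    obtain w1 where a1: "walk V E t u w1" and a2: "walk V E (d-t) w1 v"
      using walk_split[of V E t "d-t" u v] walkdv tl by (auto simp: t_def)
    have w1V': "w1 \<in> V'" using avoid[OF a1] tl by (auto simp: V'_def comp_minus_def t_def)
    have z1: "N' k w1 = 0" if "k < t" for k
    proof -
      have "\<not> walk V E k w1 u"
      proof
        assume "walk V E k w1 u"
        then have "walk V E k u w1" by (rule walk_sym[OF Esym])
        have "k + (d-t) < d" using that tl unfolding t_def by linarith
        with walk_append[OF \<open>walk V E k u w1\<close> a2] noshv[of "k + (d-t)"] show False by blast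
      qed
      then have "N k w1 = 0" using cnt[of k w1] by simp
      then show ?thesis using agree[of k w1] w1V' that tl by (simp add: t_def)
    qed
    have pos: "N' t w1 > 0"
      using cnt[of t w1] walk_sym[OF Esym a1] agree[of t w1] w1V' tl by (simp add: t_def)
    have "poly_mvec V' A q (basis_vec V' u) w1 = (\<Sum>k\<le>t. coeff q k * N' k w1)"
      by (simp add: poly_mvec_def t_def N'_def)
    also have "\<dots> = (\<Sum>k<t. coeff q k * N' k w1) + coeff q t * N' t w1"
      by (simp add: lessThan_Suc_atMost[symmetric])
    also have "(\<Sum>k<t. coeff q k * N' k w1) = 0" by (intro sum.neutral) (simp add: z1)
    finally have "poly_mvec V' A q (basis_vec V' u) w1 = N' t w1" using q(1) by (simp add: t_def)
    moreover have "poly_mvec V' A q (basis_vec V' u) w1 = 0"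
      using q(2) by (simp add: annihilates_def A_def)
    ultimately show False using pos by simp
  qed
  define c where "c = inverse (lead_coeff p)"
  have c0: "c \<noteq> 0" using p0 by (simp add: c_def)
  have "vertex_minpoly V' E u (smult c p)"
    unfolding vertex_minpoly_def
  proof (intro conjI allI impI)
    show "lead_coeff (smult c p) = 1" using p0 by (simp add: c_def)
    show "annihilates V' E u (smult c p)"
      using annp by (simp add: annihilates_def poly_mvec_smult A_def)
    fix q' assume "lead_coeff q' = 1 \<and> annihilates V' E u q'"
    then show "degree (smult c p) \<le> degree q'" using mind c0 by (simp add: d_def)
  qed
  then show ?thesis using c0 unfolding V'_def by blast
qed


end
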